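(* Let $0<\alpha<1$, and let $r,\beta$ satisfy $\alpha<\beta<1$ and $r\beta\ge1$. Let $H:\mathbb{R}^2\to\mathbb{R}^2$ (identifying $\mathbb C\cong\mathbb{R}^2$, written $H(f,\bar f)$) be Hölder continuous with exponent $\beta$, $C^1$ away from the origin, with $|H(f,\bar f)|\approx|f|^\beta$ and $|H'(f,\bar f)|\approx|f|^{\beta-1}$. Let $\epsilon>0$ with $\epsilon\ll1-\beta$. Then $$\|H(f,\bar f)\,g(|f|)\|_{\dot B^{\alpha}_{r,r}}\lesssim\|f\|^{\beta}_{\dot B^{\alpha/\beta}_{\beta r,\beta r}}+\|f\|^{\beta+\epsilon}_{\dot B^{\alpha/(\beta+\epsilon)}_{(\beta+\epsilon)r,(\beta+\epsilon)r}}.$$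
   Context: $g(s):=\log^{\gamma}(\log(10+s^2))$, $\gamma>0$. For $0<s<1$ and $p\ge1$, the homogeneous Besov norm on $\mathbb{R}^n$ is (up to equivalence) $\|f\|^p_{\dot B^s_{p,p}}=\int_{\mathbb{R}^n}\frac{\|f(\cdot+h)-f\|^p_{L^p}}{|h|^{n+sp}}\,dh$. *)

theory Defs
  imports "HOL-Analysis.Analysis"
begin

definition loglog_weight :: "real \<Rightarrow> real \<Rightarrow> real" where
  "loglog_weight \<gamma> s = (ln (ln (10 + s\<^sup>2))) powr \<gamma>"

definition enn_powr :: "ennreal \<Rightarrow> real \<Rightarrow> ennreal" where
  "enn_powr x q = (if x = \<infinity> then \<infinity> else ennreal (enn2real x powr q))"

text \<open>The p-th power of the homogeneous Besov seminorm of order s, indices (p,p), on R^n: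
  integral over h of ||f(.+h) - f||_p^p / |h|^(n+sp).\<close>
definition besov_pow :: "real \<Rightarrow> real \<Rightarrow> ('n::euclidean_space \<Rightarrow> complex) \<Rightarrow> ennreal" where
  "besov_pow s p f =
     (\<integral>\<^sup>+ h. (\<integral>\<^sup>+ x. ennreal (cmod (f (x + h) - f x) powr p) \<partial>lborel)
              / ennreal (norm h powr (real DIM('n) + s * p)) \<partial>lborel)"

definition besov_norm :: "real \<Rightarrow> real \<Rightarrow> ('n::euclidean_space \<Rightarrow> complex) \<Rightarrow> ennreal" where
  "besov_norm s p f = enn_powr (besov_pow s p f) (1 / p)"

end

theory Submission
  imports Defs
begin


lemma ln_le_powr_div:
  fixes y \<delta> :: real assumes "y \<ge> 1" "\<delta> > 0"
  shows "ln y \<le> y powr \<delta> / \<delta>"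
proof -
  have "ln (y powr \<delta>) = \<delta> * ln y" using assms by (simp add: ln_powr)
  moreover have "ln (y powr \<delta>) \<le> y powr \<delta>"
    using assms ln_le_minus_one[of "y powr \<delta>"] by auto
  ultimately show ?thesis using assms by (simp add: field_simps)
qed

lemma polylog_bound:
  fixes q \<epsilon> :: real assumes q: "q > 0" and e: "\<epsilon> > 0"
  shows "\<exists>K>0. \<forall>s\<ge>0. ln (10 + s\<^sup>2) powr q \<le> K * (1 + s powr \<epsilon>)"
proof -
  define \<delta> where "\<delta> = \<epsilon> / (2*q)"
  have d: "\<delta> > 0" using q e by (simp add: \<delta>_def)
  define K where "K = (1/\<delta>) powr q * 11 powr (\<epsilon>/2)"
  have K: "K > 0" using d by (simp add: K_def)
  have "ln (10 + s\<^sup>2) powr q \<le> K * (1 + s powr \<epsilon>)" if s: "s \<ge> 0" for s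
  proof -
    let ?y = "10 + s\<^sup>2"
    have B: "?y powr (\<epsilon>/2) \<le> 11 powr (\<epsilon>/2) * (1 + s powr \<epsilon>)"
    proof (cases "s \<le> 1")
      case True
      have "s\<^sup>2 \<le> 1" using True s by (simp add: power_le_one)
      hence "?y powr (\<epsilon>/2) \<le> 11 powr (\<epsilon>/2)" using e by (intro powr_mono2) auto
      also have "\<dots> \<le> 11 powr (\<epsilon>/2) * (1 + s powr \<epsilon>)" by simp
      finally show ?thesis .
    next
      case False
      have "?y \<le> 11 * s\<^sup>2" using False by (simp add: power2_eq_square) (smt (verit) mult_le_cancel_left1)
      hence "?y powr (\<epsilon>/2) \<le> (11 * s\<^sup>2) powr (\<epsilon>/2)" using e by (intro powr_mono2) auto
      also have "\<dots> = 11 powr (\<epsilon>/2) * s powr \<epsilon>"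
        using False by (simp add: powr_mult powr_powr flip: powr_numeral)
      also have "\<dots> \<le> 11 powr (\<epsilon>/2) * (1 + s powr \<epsilon>)" by simp
      finally show ?thesis .
    qed
    have y1: "?y \<ge> 1" by (simp add: add_increasing2)
    have lnpos: "ln ?y \<ge> 0" using y1 by simp
    have "ln ?y powr q \<le> (?y powr \<delta> / \<delta>) powr q"
      using ln_le_powr_div[OF y1 d] lnpos q by (intro powr_mono2) auto
    also have "\<dots> = (1/\<delta>) powr q * (?y powr \<delta>) powr q"
      using d by (simp add: powr_divide)
    also have "(?y powr \<delta>) powr q = ?y powr (\<epsilon>/2)"
      using q by (simp add: powr_powr \<delta>_def)
    also have "(1/\<delta>) powr q * ?y powr (\<epsilon>/2) \<le> (1/\<delta>) powr q * (11 powr (\<epsilon>/2) * (1 + s powr \<epsilon>))"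
      using B by (intro mult_left_mono) auto
    finally show ?thesis by (simp add: K_def mult.assoc)
  qed
  thus ?thesis using K by blast
qed

lemma ln10_gt1: "ln (10::real) > 1"
proof -
  have "exp 1 < (10::real)" using exp_le by linarith
  hence "ln (exp 1) < ln (10::real)" by (subst ln_less_cancel_iff) auto
  thus ?thesis by simp
qed

lemma pos10: "(0::real) < 10 + s\<^sup>2" by (intro add_pos_nonneg) auto

lemma lnX_facts:
  fixes s :: real
  shows "ln (10 + s\<^sup>2) > 1" "ln (ln (10 + s\<^sup>2)) > 0"
    "ln (ln (10 + s\<^sup>2)) \<le> ln (10 + s\<^sup>2)"
    "ln (ln (10 + s\<^sup>2)) \<ge> ln (ln 10)"
proof -
  have 0: "ln (10::real) \<le> ln (10 + s\<^sup>2)" using pos10[of s] by (subst ln_le_cancel_iff) auto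
  thus 1: "ln (10 + s\<^sup>2) > 1" using ln10_gt1 by linarith
  thus "ln (ln (10 + s\<^sup>2)) > 0" by simp
  show "ln (ln (10 + s\<^sup>2)) \<le> ln (10 + s\<^sup>2)"
    using 1 ln_le_minus_one[of "ln (10 + s\<^sup>2)"] by linarith
  show "ln (ln (10 + s\<^sup>2)) \<ge> ln (ln 10)" using ln10_gt1 0 by (subst ln_le_cancel_iff) auto
qed

lemma lnln10: "ln (ln (10::real)) > 0" using ln10_gt1 by simp

lemma g_nonneg: "loglog_weight \<gamma> s \<ge> 0"
  by (simp add: loglog_weight_def)

lemma g_growth:
  fixes \<gamma> \<epsilon> :: real assumes "\<gamma> > 0" "\<epsilon> > 0"
  shows "\<exists>K>0. \<forall>s\<ge>0. loglog_weight \<gamma> s \<le> K * (1 + s powr \<epsilon>)"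
proof -
  obtain K where K: "K > 0" "\<forall>s\<ge>0. ln (10 + s\<^sup>2) powr \<gamma> \<le> K * (1 + s powr \<epsilon>)"
    using polylog_bound[OF assms] by blast
  have "loglog_weight \<gamma> s \<le> K * (1 + s powr \<epsilon>)" if "s \<ge> 0" for s
  proof -
    have "loglog_weight \<gamma> s \<le> ln (10 + s\<^sup>2) powr \<gamma>"
      unfolding loglog_weight_def using lnX_facts[of s] assms by (intro powr_mono2) auto
    thus ?thesis using K that by fastforce
  qed
  thus ?thesis using K by blast
qed

lemma g_has_deriv:
  fixes z \<gamma> :: real
  shows "(loglog_weight \<gamma> has_real_derivative
     \<gamma> * ln (ln (10 + z\<^sup>2)) powr (\<gamma> - 1) * (1 / ln (10 + z\<^sup>2)) * (2 * z / (10 + z\<^sup>2))) (at z)"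
proof -
  have e: "loglog_weight \<gamma> = (\<lambda>s. ln (ln (10 + s\<^sup>2)) powr \<gamma>)"
    by (simp add: loglog_weight_def fun_eq_iff)
  show ?thesis unfolding e
    using lnX_facts[of z] pos10[of z] add_pos_nonneg[of "9::real" "z\<^sup>2"]
    by (auto intro!: derivative_eq_intros simp: field_simps)
qed

definition gd :: "real \<Rightarrow> real \<Rightarrow> real" where
  "gd \<gamma> z = \<gamma> * ln (ln (10 + z\<^sup>2)) powr (\<gamma> - 1) * (1 / ln (10 + z\<^sup>2)) * (2 * z / (10 + z\<^sup>2))"

lemma gd_bound:
  fixes \<gamma> \<epsilon> :: real assumes g: "\<gamma> > 0" and e: "\<epsilon> > 0"
  shows "\<exists>K>0. \<forall>z>0. \<bar>gd \<gamma> z\<bar> * z \<le> K * (1 + z powr \<epsilon>)"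
proof -
  have b1: "\<bar>gd \<gamma> z\<bar> * z \<le> 2 * \<gamma> * ln (ln (10 + z\<^sup>2)) powr (\<gamma> - 1)" if z: "z > 0" for z
  proof -
    let ?X = "ln (10 + z\<^sup>2)" and ?L = "ln (ln (10 + z\<^sup>2))"
    have X: "?X > 1" "?L > 0" using lnX_facts[of z] by auto
    have p: "0 < 10 + z\<^sup>2" by (rule pos10)
    have "\<bar>gd \<gamma> z\<bar> * z = \<gamma> * ?L powr (\<gamma> - 1) * ((1 / ?X) * (2 * z\<^sup>2 / (10 + z\<^sup>2)))"
      using X z p g by (simp add: gd_def abs_mult power2_eq_square)
    also have "(1 / ?X) * (2 * z\<^sup>2 / (10 + z\<^sup>2)) \<le> 1 * 2"
    proof (rule mult_mono)
      show "1 / ?X \<le> 1" using X by simp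
      show "2 * z\<^sup>2 / (10 + z\<^sup>2) \<le> 2" using p by (simp add: divide_le_eq)
    qed auto
    hence "\<gamma> * ?L powr (\<gamma> - 1) * ((1 / ?X) * (2 * z\<^sup>2 / (10 + z\<^sup>2))) \<le> \<gamma> * ?L powr (\<gamma> - 1) * 2"
      using g by (intro mult_left_mono) auto
    finally show ?thesis by simp
  qed
  show ?thesis
  proof (cases "\<gamma> \<le> 1")
    case True
    define K where "K = 2 * \<gamma> * ln (ln (10::real)) powr (\<gamma> - 1)"
    have K: "K > 0" using g lnln10 by (simp add: K_def)
    have "\<bar>gd \<gamma> z\<bar> * z \<le> K * (1 + z powr \<epsilon>)" if z: "z > 0" for z
    proof -
      have "ln (ln (10 + z\<^sup>2)) powr (\<gamma> - 1) \<le> ln (ln (10::real)) powr (\<gamma> - 1)"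
        using True lnln10 lnX_facts[of z] by (intro powr_mono2') auto
      hence "\<bar>gd \<gamma> z\<bar> * z \<le> K" using b1[OF z] g unfolding K_def
        by (smt (verit) mult_left_mono)
      also have "K \<le> K * (1 + z powr \<epsilon>)" using K by simp
      finally show ?thesis .
    qed
    thus ?thesis using K by blast
  next
    case False
    obtain K where K: "K > 0" "\<forall>s\<ge>0. ln (10 + s\<^sup>2) powr (\<gamma> - 1) \<le> K * (1 + s powr \<epsilon>)"
      using polylog_bound[of "\<gamma> - 1" \<epsilon>] False e by auto
    have "\<bar>gd \<gamma> z\<bar> * z \<le> (2 * \<gamma> * K) * (1 + z powr \<epsilon>)" if z: "z > 0" for z
    proof -
      have "ln (ln (10 + z\<^sup>2)) powr (\<gamma> - 1) \<le> ln (10 + z\<^sup>2) powr (\<gamma> - 1)"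
        using False lnX_facts[of z] by (intro powr_mono2) auto
      also have "\<dots> \<le> K * (1 + z powr \<epsilon>)" using K z by auto
      finally have "2 * \<gamma> * ln (ln (10 + z\<^sup>2)) powr (\<gamma> - 1) \<le> 2 * \<gamma> * (K * (1 + z powr \<epsilon>))"
        using g by (intro mult_left_mono) auto
      thus ?thesis using b1[OF z] by simp
    qed
    thus ?thesis using K g by (intro exI[of _ "2 * \<gamma> * K"]) auto
  qed
qed

lemma key_ineq:
  fixes d M \<beta> \<epsilon> :: real
  assumes d: "0 < d" "d \<le> M" and b: "0 < \<beta>" "\<beta> + \<epsilon> \<le> 1" and e: "0 < \<epsilon>"
  shows "d * M powr (\<beta> - 1) * (1 + M powr \<epsilon>) \<le> d powr \<beta> + d powr (\<beta> + \<epsilon>)"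
proof -
  have M: "M > 0" using d by simp
  define t where "t = d / M"
  have t: "0 < t" "t \<le> 1" using d M by (auto simp: t_def)
  have 1: "d * M powr (\<beta> - 1) = d powr \<beta> * t powr (1 - \<beta>)"
  proof -
    have "d = d powr \<beta> * d powr (1 - \<beta>)" using d by (simp flip: powr_add)
    moreover have "M powr (\<beta> - 1) = 1 / M powr (1 - \<beta>)"
      using powr_minus_divide[of M "1-\<beta>"] by simp
    moreover have "t powr (1 - \<beta>) = d powr (1 - \<beta>) / M powr (1 - \<beta>)"
      using d M by (simp add: t_def powr_divide)
    ultimately show ?thesis by (metis (no_types, lifting) mult.assoc times_divide_eq_right mult_1_right)
  qed
  have 2: "t powr (1 - \<beta>) \<le> 1" using t b e by (intro powr_le1) auto
  have 3: "t powr (1 - \<beta>) * M powr \<epsilon> \<le> d powr \<epsilon>"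
  proof -
    have "t powr (1 - \<beta>) \<le> t powr \<epsilon>" using t b by (intro powr_mono') auto
    hence "t powr (1 - \<beta>) * M powr \<epsilon> \<le> t powr \<epsilon> * M powr \<epsilon>" by (intro mult_right_mono) auto
    also have "\<dots> = d powr \<epsilon>" using d M by (simp add: t_def powr_divide)
    finally show ?thesis .
  qed
  have "d * M powr (\<beta> - 1) * (1 + M powr \<epsilon>) = d powr \<beta> * t powr (1 - \<beta>) + d powr \<beta> * (t powr (1 - \<beta>) * M powr \<epsilon>)"
    by (simp add: 1 algebra_simps)
  also have "\<dots> \<le> d powr \<beta> * 1 + d powr \<beta> * d powr \<epsilon>"
    using 2 3 by (intro add_mono mult_left_mono) auto
  also have "\<dots> = d powr \<beta> + d powr (\<beta> + \<epsilon>)" by (simp add: powr_add)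
  finally show ?thesis .
qed

lemma half_powr:
  fixes M \<beta> :: real assumes M: "M > 0"
  shows "(M/2) powr (\<beta>-1) = M powr (\<beta>-1) * 2 powr (1-\<beta>)"
proof -
  have a: "(M/2) powr (\<beta>-1) = M powr (\<beta>-1) / 2 powr (\<beta>-1)" using M by (simp add: powr_divide)
  have b: "2 powr (1-\<beta>) * 2 powr (\<beta>-1) = (1::real)" by (simp flip: powr_add)
  have c: "2 powr (\<beta>-1) > (0::real)" by simp
  show ?thesis unfolding a using b c by (simp add: field_simps)
qed

lemma pointwise_core:
  fixes H :: "complex \<Rightarrow> complex" and H' :: "complex \<Rightarrow> complex \<Rightarrow>\<^sub>L complex"
    and g gd :: "real \<Rightarrow> real"
  assumes b: "0 < \<beta>" "\<beta> + \<epsilon> \<le> 1" and e: "0 < \<epsilon>"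
    and c2: "c2 > 0" "\<And>z. cmod (H z) \<le> c2 * cmod z powr \<beta>"
    and c3: "c3 > 0" "\<And>z. z \<noteq> 0 \<Longrightarrow> norm (H' z) \<le> c3 * cmod z powr (\<beta> - 1)"
    and der: "\<And>z. z \<noteq> 0 \<Longrightarrow> (H has_derivative blinfun_apply (H' z)) (at z)"
    and Kg: "Kg > 0" "\<And>s. s \<ge> 0 \<Longrightarrow> 0 \<le> g s \<and> g s \<le> Kg * (1 + s powr \<epsilon>)"
    and Kd: "Kd > 0" "\<And>z. z > 0 \<Longrightarrow> (g has_real_derivative gd z) (at z) \<and> \<bar>gd z\<bar> * z \<le> Kd * (1 + z powr \<epsilon>)"
    and ab: "cmod b \<le> cmod a"
  shows "cmod (H a * of_real (g (cmod a)) - H b * of_real (g (cmod b)))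
     \<le> (4*c2*Kg + c3 * 2 powr (1-\<beta>) * Kg + 2*c2*Kd) * (cmod (a-b) powr \<beta> + cmod (a-b) powr (\<beta>+\<epsilon>))"
proof -
  define M where "M = cmod a"
  define m where "m = cmod b"
  define d where "d = cmod (a - b)"
  define \<Phi> where "\<Phi> x = x powr \<beta> + x powr (\<beta>+\<epsilon>)" for x :: real
  define K where "K = 4*c2*Kg + c3 * 2 powr (1-\<beta>) * Kg + 2*c2*Kd"
  have Phi0: "\<Phi> x \<ge> 0" for x by (simp add: \<Phi>_def)
  have Phimono: "\<Phi> x \<le> \<Phi> y" if "0 \<le> x" "x \<le> y" for x y
    unfolding \<Phi>_def using that b e by (intro add_mono powr_mono2) auto
  have Kparts: "0 \<le> c3 * 2 powr (1-\<beta>) * Kg" "0 \<le> 2*c2*Kd" "0 \<le> 4*c2*Kg"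
    using c2 c3 Kg Kd by auto
  have Fb: "cmod (H z * of_real (g (cmod z))) \<le> c2 * Kg * \<Phi> (cmod z)" for z
  proof -
    have g: "0 \<le> g (cmod z)" "g (cmod z) \<le> Kg * (1 + cmod z powr \<epsilon>)" using Kg(2)[of "cmod z"] by auto
    have "cmod (H z * of_real (g (cmod z))) = cmod (H z) * g (cmod z)"
      using g by (simp add: norm_mult)
    also have "\<dots> \<le> (c2 * cmod z powr \<beta>) * (Kg * (1 + cmod z powr \<epsilon>))"
      using g c2 by (intro mult_mono) auto
    also have "\<dots> = c2 * Kg * \<Phi> (cmod z)"
      by (simp add: \<Phi>_def powr_add algebra_simps)
    finally show ?thesis .
  qed
  show ?thesis
  proof (cases "M \<le> 2 * d")
    case True
    have P2: "\<Phi> (2 * d) \<le> 2 * \<Phi> d"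
    proof -
      have d0: "d \<ge> 0" by (simp add: d_def)
      have "(2*d) powr \<beta> = 2 powr \<beta> * d powr \<beta>" using d0 by (simp add: powr_mult)
      moreover have "(2*d) powr (\<beta>+\<epsilon>) = 2 powr (\<beta>+\<epsilon>) * d powr (\<beta>+\<epsilon>)" using d0 by (simp add: powr_mult)
      moreover have "2 powr \<beta> \<le> 2" using b e powr_mono[of \<beta> 1 2] by auto
      moreover have "2 powr (\<beta>+\<epsilon>) \<le> 2" using b powr_mono[of "\<beta>+\<epsilon>" 1 2] by auto
      ultimately show ?thesis unfolding \<Phi>_def
      proof -
        assume e1: "(2*d) powr \<beta> = 2 powr \<beta> * d powr \<beta>"
          and e2: "(2*d) powr (\<beta>+\<epsilon>) = 2 powr (\<beta>+\<epsilon>) * d powr (\<beta>+\<epsilon>)"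
          and l1: "2 powr \<beta> \<le> 2" and l2: "2 powr (\<beta>+\<epsilon>) \<le> 2"
        have "2 powr \<beta> * d powr \<beta> \<le> 2 * d powr \<beta>" using l1 by (intro mult_right_mono) auto
        moreover have "2 powr (\<beta>+\<epsilon>) * d powr (\<beta>+\<epsilon>) \<le> 2 * d powr (\<beta>+\<epsilon>)" using l2 by (intro mult_right_mono) auto
        ultimately show "(2 * d) powr \<beta> + (2 * d) powr (\<beta> + \<epsilon>) \<le> 2 * (d powr \<beta> + d powr (\<beta> + \<epsilon>))"
          unfolding e1 e2 by simp
      qed
    qed
    have "cmod (H a * of_real (g (cmod a)) - H b * of_real (g (cmod b)))
        \<le> cmod (H a * of_real (g (cmod a))) + cmod (H b * of_real (g (cmod b)))"
      by (rule norm_triangle_ineq4)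
    also have "\<dots> \<le> c2 * Kg * \<Phi> M + c2 * Kg * \<Phi> M"
    proof -
      have "\<Phi> m \<le> \<Phi> M" using Phimono[of m M] ab by (simp add: M_def m_def)
      hence "c2 * Kg * \<Phi> m \<le> c2 * Kg * \<Phi> M" using c2 Kg by (intro mult_left_mono) auto
      thus ?thesis using Fb[of a] Fb[of b] unfolding M_def m_def by linarith
    qed
    also have "\<dots> \<le> 4 * c2 * Kg * \<Phi> d"
    proof -
      have "\<Phi> M \<le> 2 * \<Phi> d" using Phimono[of M "2*d"] True P2 by (simp add: M_def)
      hence "c2 * Kg * \<Phi> M \<le> c2 * Kg * (2 * \<Phi> d)" using c2 Kg by (intro mult_left_mono) auto
      thus ?thesis by (simp add: algebra_simps)
    qed
    also have "\<dots> \<le> K * \<Phi> d" unfolding K_def using Kparts Phi0[of d]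
      by (intro mult_right_mono) auto
    finally show ?thesis by (simp add: K_def \<Phi>_def d_def)
  next
    case False
    show ?thesis
    proof (cases "d = 0")
      case True
      hence "a = b" by (simp add: d_def)
      thus ?thesis using Kparts by (simp add: K_def)
    next
      case d0: False
      have dpos: "d > 0" using d0 by (simp add: d_def)
      have Mpos: "M > 0" "M > 2 * d" using False dpos by auto
      have hH: "cmod (H a - H b) \<le> c3 * (M/2) powr (\<beta>-1) * d"
      proof -
        have "norm (H a - H b) \<le> c3 * (M/2) powr (\<beta>-1) * norm (a - b)"
        proof (rule differentiable_bound[of "closed_segment b a" H "\<lambda>z. blinfun_apply (H' z)"])
          show "convex (closed_segment b a)" by simp
          fix z assume z: "z \<in> closed_segment b a"
          have "norm (z - a) \<le> norm (a - b)" using segment_bound(2)[OF z] by simp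
          hence zM: "cmod z \<ge> M/2" using Mpos norm_triangle_ineq2[of a "a - z"]
            unfolding M_def d_def by (simp add: norm_minus_commute)
          hence zne: "z \<noteq> 0" using Mpos by auto
          show "(H has_derivative blinfun_apply (H' z)) (at z within closed_segment b a)"
            using der[OF zne] by (rule has_derivative_at_withinI)
          have "onorm (blinfun_apply (H' z)) = norm (H' z)" by (simp add: norm_blinfun.rep_eq)
          also have "\<dots> \<le> c3 * cmod z powr (\<beta> - 1)" using c3(2)[OF zne] .
          also have "\<dots> \<le> c3 * (M/2) powr (\<beta>-1)"
            using c3 zM Mpos b e by (intro mult_left_mono powr_mono2') auto
          finally show "onorm (blinfun_apply (H' z)) \<le> c3 * (M/2) powr (\<beta>-1)" .
        qed auto
        thus ?thesis by (simp add: d_def)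
      qed
      have mM: "M - m \<le> d" "m \<le> M" "m > M/2"
        using norm_triangle_ineq2[of a b] ab Mpos unfolding M_def m_def d_def by auto
      have hg: "\<bar>g M - g m\<bar> \<le> d * (2 * Kd * (1 + M powr \<epsilon>) / M)"
      proof (cases "m = M")
        case True thus ?thesis using Kd Mpos dpos by simp
      next
        case False
        hence mlt: "m < M" using mM by simp
        obtain z where z: "m < z" "z < M" "g M - g m = (M - m) * gd z"
        proof -
          have "DERIV g x :> gd x" if "m \<le> x" "x \<le> M" for x
          proof -
            have "x > 0" using that mM Mpos by linarith
            thus ?thesis using Kd(2) by blast
          qed
          thus ?thesis using MVT2[OF mlt, of g gd] that by blast
        qed
        have zpos: "z > 0" using z mM Mpos by linarith
        have gz1: "\<bar>gd z\<bar> * z \<le> Kd * (1 + M powr \<epsilon>)"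
        proof -
          have "z powr \<epsilon> \<le> M powr \<epsilon>" using z zpos e by (intro powr_mono2) auto
          hence "Kd * (1 + z powr \<epsilon>) \<le> Kd * (1 + M powr \<epsilon>)" using Kd(1) by (intro mult_left_mono) auto
          thus ?thesis using Kd(2)[OF zpos] by linarith
        qed
        have "\<bar>gd z\<bar> * (M/2) \<le> Kd * (1 + M powr \<epsilon>)"
        proof -
          have "\<bar>gd z\<bar> * (M/2) \<le> \<bar>gd z\<bar> * z" using z mM by (intro mult_left_mono) auto
          thus ?thesis using gz1 by linarith
        qed
        hence gdz: "\<bar>gd z\<bar> \<le> 2 * Kd * (1 + M powr \<epsilon>) / M"
          using Mpos by (simp add: field_simps)
        have "\<bar>g M - g m\<bar> = (M - m) * \<bar>gd z\<bar>" using z mlt by (simp add: abs_mult)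
        also have "\<dots> \<le> d * (2 * Kd * (1 + M powr \<epsilon>) / M)"
          using mM mlt gdz by (intro mult_mono) auto
        finally show ?thesis .
      qed
      have hHb: "cmod (H b) \<le> c2 * M powr \<beta>"
      proof -
        have "m powr \<beta> \<le> M powr \<beta>" using mM b by (intro powr_mono2) (auto simp: m_def)
        hence "c2 * m powr \<beta> \<le> c2 * M powr \<beta>" using c2(1) by (intro mult_left_mono) auto
        thus ?thesis using c2(2)[of b] unfolding m_def by linarith
      qed
      have gM: "0 \<le> g M" "g M \<le> Kg * (1 + M powr \<epsilon>)" using Kg(2)[of M] Mpos by auto
      have split: "H a * of_real (g (cmod a)) - H b * of_real (g (cmod b))
          = (H a - H b) * of_real (g M) + H b * of_real (g M - g m)"
        unfolding M_def m_def by (simp add: algebra_simps)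
      define T where "T = d * M powr (\<beta> - 1) * (1 + M powr \<epsilon>)"
      have "cmod (H a * of_real (g (cmod a)) - H b * of_real (g (cmod b)))
          \<le> cmod (H a - H b) * g M + cmod (H b) * \<bar>g M - g m\<bar>"
        unfolding split using gM norm_triangle_ineq[of "(H a - H b) * of_real (g M)" "H b * of_real (g M - g m)"]
        by (simp add: norm_mult flip: of_real_diff)
      also have "\<dots> \<le> (c3 * (M/2) powr (\<beta>-1) * d) * (Kg * (1 + M powr \<epsilon>))
                     + (c2 * M powr \<beta>) * (d * (2 * Kd * (1 + M powr \<epsilon>) / M))"
      proof (rule add_mono)
        have p1: "0 \<le> c3 * (M/2) powr (\<beta>-1) * d" using c3(1) dpos by simp
        show "cmod (H a - H b) * g M \<le> (c3 * (M/2) powr (\<beta>-1) * d) * (Kg * (1 + M powr \<epsilon>))"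
          by (rule mult_mono[OF hH gM(2) p1 gM(1)])
        have p2: "0 \<le> c2 * M powr \<beta>" using c2(1) by simp
        show "cmod (H b) * \<bar>g M - g m\<bar> \<le> (c2 * M powr \<beta>) * (d * (2 * Kd * (1 + M powr \<epsilon>) / M))"
          by (rule mult_mono[OF hHb hg p2 abs_ge_zero])
      qed
      also have "\<dots> = (c3 * 2 powr (1-\<beta>) * Kg + 2*c2*Kd) * T"
      proof -
        have e1: "(M/2) powr (\<beta>-1) = M powr (\<beta>-1) * 2 powr (1-\<beta>)"
          using Mpos(1) by (rule half_powr)
        have e2: "M powr \<beta> / M = M powr (\<beta> - 1)"
          using Mpos by (simp add: powr_diff)
        have t1: "(c3 * (M/2) powr (\<beta>-1) * d) * (Kg * (1 + M powr \<epsilon>)) = c3 * 2 powr (1-\<beta>) * Kg * T"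
          unfolding T_def e1 by (simp only: ac_simps)
        have t2: "(c2 * M powr \<beta>) * (d * (2 * Kd * (1 + M powr \<epsilon>) / M)) = 2*c2*Kd * T"
        proof -
          have "(c2 * M powr \<beta>) * (d * (2 * Kd * (1 + M powr \<epsilon>) / M))
              = 2*c2*Kd * (d * (M powr \<beta> / M) * (1 + M powr \<epsilon>))" by (simp add: field_simps)
          thus ?thesis unfolding T_def e2 .
        qed
        show ?thesis unfolding t1 t2 by (rule distrib_right[symmetric])
      qed
      also have "\<dots> \<le> (c3 * 2 powr (1-\<beta>) * Kg + 2*c2*Kd) * \<Phi> d"
        unfolding T_def \<Phi>_def using key_ineq[of d M \<beta> \<epsilon>] dpos Mpos b e Kparts
        by (intro mult_left_mono) auto
      also have "\<dots> \<le> K * \<Phi> d" unfolding K_def using Kparts Phi0[of d]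
        by (intro mult_right_mono) auto
      finally show ?thesis by (simp add: K_def \<Phi>_def d_def)
    qed
  qed
qed



lemma meas_inner:
  fixes f :: "'n::euclidean_space \<Rightarrow> complex"
  assumes f: "f \<in> borel_measurable lborel"
  shows "(\<lambda>h. \<integral>\<^sup>+ x. ennreal (cmod (f (x + h) - f x) powr p) \<partial>lborel) \<in> borel_measurable lborel"
proof -
  have fb: "f \<in> borel_measurable borel" using f by simp
  have "(\<lambda>(h, x). ennreal (cmod (f (x + h) - f x) powr p)) \<in> borel_measurable (lborel \<Otimes>\<^sub>M lborel)"
    using fb by measurable
  thus ?thesis by (rule lborel.borel_measurable_nn_integral)
qed

lemma meas_x:
  fixes f :: "'n::euclidean_space \<Rightarrow> complex"
  assumes f: "f \<in> borel_measurable lborel"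
  shows "(\<lambda>x. ennreal (cmod (f (x + h) - f x) powr p)) \<in> borel_measurable lborel"
  using f by simp measurable

lemma besov_bound:
  fixes F :: "complex \<Rightarrow> complex" and f :: "'n::euclidean_space \<Rightarrow> complex"
  assumes f: "f \<in> borel_measurable lborel" and Ff: "(\<lambda>x. F (f x)) \<in> borel_measurable lborel"
    and K: "K \<ge> 0"
    and pw: "\<And>a b. cmod (F a - F b) powr r \<le> K * (cmod (a-b) powr p1 + cmod (a-b) powr p2)"
    and e1: "s * r = s1 * p1" and e2: "s * r = s2 * p2"
  shows "besov_pow s r (\<lambda>x. F (f x)) \<le> ennreal K * (besov_pow s1 p1 f + besov_pow s2 p2 f)"
proof -
  define I where "I p g h = (\<integral>\<^sup>+ x. ennreal (cmod (g (x + h) - g x) powr p) \<partial>lborel)"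
    for p and g :: "'n \<Rightarrow> complex" and h
  define W where "W h = ennreal (norm h powr (real DIM('n) + s * r))" for h :: 'n
  have mI: "(\<lambda>h. I p f h) \<in> borel_measurable lborel" for p
    unfolding I_def by (rule meas_inner[OF f])
  have mW: "W \<in> borel_measurable lborel" unfolding W_def by measurable
  have step1: "I r (\<lambda>x. F (f x)) h \<le> ennreal K * (I p1 f h + I p2 f h)" for h
  proof -
    have "I r (\<lambda>x. F (f x)) h \<le> (\<integral>\<^sup>+ x. ennreal K * (ennreal (cmod (f (x + h) - f x) powr p1)
                  + ennreal (cmod (f (x + h) - f x) powr p2)) \<partial>lborel)"
      unfolding I_def
    proof (rule nn_integral_mono)
      fix x
      have "cmod (F (f (x + h)) - F (f x)) powr r \<le> K * (cmod (f (x + h) - f x) powr p1 + cmod (f (x + h) - f x) powr p2)"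
        by (rule pw)
      thus "ennreal (cmod (F (f (x + h)) - F (f x)) powr r)
          \<le> ennreal K * (ennreal (cmod (f (x + h) - f x) powr p1) + ennreal (cmod (f (x + h) - f x) powr p2))"
        using K by (simp add: ennreal_mult[symmetric] ennreal_plus[symmetric] del: ennreal_plus)
    qed
    also have "\<dots> = ennreal K * (I p1 f h + I p2 f h)"
    proof -
      have m1: "(\<lambda>x. ennreal (cmod (f (x + h) - f x) powr p1)) \<in> borel_measurable lborel" by (rule meas_x[OF f])
      have m2: "(\<lambda>x. ennreal (cmod (f (x + h) - f x) powr p2)) \<in> borel_measurable lborel" by (rule meas_x[OF f])
      show ?thesis
        by (subst nn_integral_cmult) (use m1 m2 in \<open>auto simp: nn_integral_add I_def\<close>)
    qed
    finally show ?thesis .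
  qed
  have "besov_pow s r (\<lambda>x. F (f x)) = (\<integral>\<^sup>+ h. I r (\<lambda>x. F (f x)) h / W h \<partial>lborel)"
    unfolding besov_pow_def I_def W_def ..
  also have "\<dots> \<le> (\<integral>\<^sup>+ h. ennreal K * (I p1 f h / W h) + ennreal K * (I p2 f h / W h) \<partial>lborel)"
  proof (rule nn_integral_mono)
    fix h
    have "I r (\<lambda>x. F (f x)) h / W h \<le> (ennreal K * (I p1 f h + I p2 f h)) / W h"
      using step1[of h] by (simp add: divide_ennreal_def mult_right_mono)
    also have "\<dots> = ennreal K * (I p1 f h / W h) + ennreal K * (I p2 f h / W h)"
      by (simp add: divide_ennreal_def algebra_simps)
    finally show "I r (\<lambda>x. F (f x)) h / W h \<le> ennreal K * (I p1 f h / W h) + ennreal K * (I p2 f h / W h)" .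
  qed
  also have "\<dots> = ennreal K * ((\<integral>\<^sup>+ h. I p1 f h / W h \<partial>lborel) + (\<integral>\<^sup>+ h. I p2 f h / W h \<partial>lborel))"
    using mI mW by (simp add: nn_integral_cmult nn_integral_add distrib_left)
  also have "(\<integral>\<^sup>+ h. I p1 f h / W h \<partial>lborel) = besov_pow s1 p1 f"
    unfolding besov_pow_def I_def W_def e1 ..
  also have "(\<integral>\<^sup>+ h. I p2 f h / W h \<partial>lborel) = besov_pow s2 p2 f"
    unfolding besov_pow_def I_def W_def e2 ..
  finally show ?thesis .
qed

lemma pow_bound:
  fixes x u v K r :: real
  assumes "x \<ge> 0" "u \<ge> 0" "v \<ge> 0" "K \<ge> 0" "r \<ge> 0" "x \<le> K * (u + v)"
  shows "x powr r \<le> (2 * K) powr r * (u powr r + v powr r)"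
proof -
  have "x powr r \<le> (K * (u + v)) powr r" using assms by (intro powr_mono2) auto
  also have "\<dots> \<le> (2 * K * max u v) powr r"
  proof -
    have "u + v \<le> 2 * max u v" by (simp add: max_def)
    hence "K * (u + v) \<le> K * (2 * max u v)" using assms by (intro mult_left_mono) auto
    thus ?thesis using assms by (intro powr_mono2) (auto simp: mult.assoc)
  qed
  also have "\<dots> = (2 * K) powr r * (max u v) powr r" using assms by (simp add: powr_mult)
  also have "(max u v) powr r \<le> u powr r + v powr r" by (simp add: max_def)
  hence "(2 * K) powr r * (max u v) powr r \<le> (2 * K) powr r * (u powr r + v powr r)"
    by (intro mult_left_mono) auto
  finally show ?thesis .
qed

lemma enn_powr_powr:
  assumes "t > 0" "r > 0"
  shows "enn_powr (enn_powr A (1 / (t * r))) t = enn_powr A (1 / r)"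
  using assms by (cases "A = \<infinity>") (auto simp: enn_powr_def powr_powr)

lemma enn_final:
  fixes P A B :: ennreal and K r :: real
  assumes P: "P \<le> ennreal K * (A + B)" and K: "K \<ge> 0" and r: "r \<ge> 1"
  shows "enn_powr P (1 / r) \<le> ennreal (2 * K powr (1/r) + 1) * (enn_powr A (1 / r) + enn_powr B (1 / r))"
proof (cases "A = \<infinity> \<or> B = \<infinity>")
  case True
  have C: "ennreal (2 * K powr (1/r) + 1) \<noteq> 0"
  proof -
    have "2 * K powr (1/r) + 1 > 0" by (simp add: add_nonneg_pos)
    thus ?thesis by simp
  qed
  from True have S: "enn_powr A (1 / r) + enn_powr B (1 / r) = \<infinity>" by (auto simp: enn_powr_def)
  have "ennreal (2 * K powr (1/r) + 1) * \<infinity> = \<infinity>" using C by (simp only: infinity_ennreal_def ennreal_mult_top if_False)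
  hence E: "ennreal (2 * K powr (1/r) + 1) * \<infinity> = top" by (simp only: infinity_ennreal_def)
  show ?thesis unfolding S E by (rule top_greatest)
next
  case False
  obtain a where a: "A = ennreal a" "a \<ge> 0" using False by (cases A) auto
  obtain b where b: "B = ennreal b" "b \<ge> 0" using False by (cases B) auto
  have ab: "A = ennreal a" "B = ennreal b" "a \<ge> 0" "b \<ge> 0" using a b by auto
  have Pl: "P \<le> ennreal (K * (a + b))" using P ab K by (simp add: ennreal_mult ennreal_plus[symmetric] del: ennreal_plus)
  have "P \<noteq> top"
  proof
    assume "P = top"
    hence "top \<le> ennreal (K * (a + b))" using Pl by simp
    thus False by (simp add: top_unique)
  qed
  then obtain p where p0: "P = ennreal p" "p \<ge> 0" by (cases P) auto
  have x0: "0 \<le> K * (a + b)" using K ab by simp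
  have "p \<le> K * (a + b)" using Pl p0 ennreal_le_iff[OF x0] by simp
  with p0 have p: "P = ennreal p" "p \<ge> 0" "p \<le> K * (a + b)" by auto
  have q: "1 / r \<ge> 0" "1 / r \<le> 1" using r by auto
  have "p powr (1/r) \<le> (2 * K) powr (1/r) * (a powr (1/r) + b powr (1/r))"
    using pow_bound[of p a b K "1/r"] p ab K q by (simp add: algebra_simps)
  also have "(2 * K) powr (1/r) \<le> 2 * K powr (1/r) + 1"
  proof -
    have "(2 * K) powr (1/r) = 2 powr (1/r) * K powr (1/r)" using K by (simp add: powr_mult)
    also have "2 powr (1/r) \<le> 2 powr 1" using q by (intro powr_mono) auto
    hence "2 powr (1/r) * K powr (1/r) \<le> 2 * K powr (1/r)" by (intro mult_right_mono) auto
    finally show ?thesis by simp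
  qed
  hence "(2 * K) powr (1/r) * (a powr (1/r) + b powr (1/r)) \<le> (2 * K powr (1/r) + 1) * (a powr (1/r) + b powr (1/r))"
    by (intro mult_right_mono) auto
  finally have main: "p powr (1/r) \<le> (2 * K powr (1/r) + 1) * (a powr (1/r) + b powr (1/r))" .
  show ?thesis using p ab main
    by (simp add: enn_powr_def ennreal_mult[symmetric] ennreal_plus[symmetric] del: ennreal_plus)
qed



lemma pointwise_sym:
  fixes H :: "complex \<Rightarrow> complex" and H' :: "complex \<Rightarrow> complex \<Rightarrow>\<^sub>L complex"
    and g gd :: "real \<Rightarrow> real"
  assumes b: "0 < \<beta>" "\<beta> + \<epsilon> \<le> 1" and e: "0 < \<epsilon>"
    and c2: "c2 > 0" "\<And>z. cmod (H z) \<le> c2 * cmod z powr \<beta>"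
    and c3: "c3 > 0" "\<And>z. z \<noteq> 0 \<Longrightarrow> norm (H' z) \<le> c3 * cmod z powr (\<beta> - 1)"
    and der: "\<And>z. z \<noteq> 0 \<Longrightarrow> (H has_derivative blinfun_apply (H' z)) (at z)"
    and Kg: "Kg > 0" "\<And>s. s \<ge> 0 \<Longrightarrow> 0 \<le> g s \<and> g s \<le> Kg * (1 + s powr \<epsilon>)"
    and Kd: "Kd > 0" "\<And>z. z > 0 \<Longrightarrow> (g has_real_derivative gd z) (at z) \<and> \<bar>gd z\<bar> * z \<le> Kd * (1 + z powr \<epsilon>)"
  shows "cmod (H a * of_real (g (cmod a)) - H b * of_real (g (cmod b)))
     \<le> (4*c2*Kg + c3 * 2 powr (1-\<beta>) * Kg + 2*c2*Kd) * (cmod (a-b) powr \<beta> + cmod (a-b) powr (\<beta>+\<epsilon>))"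
proof (cases "cmod b \<le> cmod a")
  case True
  show ?thesis by (rule pointwise_core[OF b e c2 c3 der Kg Kd True])
next
  case False
  hence ba: "cmod a \<le> cmod b" by simp
  have "cmod (H b * of_real (g (cmod b)) - H a * of_real (g (cmod a)))
     \<le> (4*c2*Kg + c3 * 2 powr (1-\<beta>) * Kg + 2*c2*Kd) * (cmod (b-a) powr \<beta> + cmod (b-a) powr (\<beta>+\<epsilon>))"
    by (rule pointwise_core[OF b e c2 c3 der Kg Kd ba])
  thus ?thesis by (simp add: norm_minus_commute)
qed

lemma holder_cont:
  fixes H :: "complex \<Rightarrow> complex"
  assumes b: "\<beta> > 0" and C: "\<forall>z w. cmod (H z - H w) \<le> C * cmod (z - w) powr \<beta>"
  shows "continuous_on UNIV H"
proof -
  have "isCont H z" for z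
  proof -
    have t: "((\<lambda>w. C * cmod (w - z) powr \<beta>) \<longlongrightarrow> 0) (at z)"
    proof -
      have "((\<lambda>w. cmod (w - z)) \<longlongrightarrow> 0) (at z)"
        by (intro tendsto_eq_intros) (auto intro!: tendsto_ident_at)
      hence "((\<lambda>w. cmod (w - z) powr \<beta>) \<longlongrightarrow> 0) (at z)"
        using b by (intro tendsto_zero_powrI) auto
      thus ?thesis using tendsto_mult_right_zero by blast
    qed
    have "((\<lambda>w. H w - H z) \<longlongrightarrow> 0) (at z)"
      by (rule Lim_null_comparison[OF _ t]) (use C in auto)
    thus ?thesis unfolding isCont_def by (simp add: LIM_zero_iff)
  qed
  thus ?thesis by (simp add: continuous_at_imp_continuous_on)
qed

lemma g_cont: "continuous_on UNIV (loglog_weight \<gamma>)"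
proof -
  have "isCont (loglog_weight \<gamma>) z" for z
    using g_has_deriv[of \<gamma> z] by (rule DERIV_isCont)
  thus ?thesis by (simp add: continuous_at_imp_continuous_on)
qed

theorem mainTheorem9:
  fixes \<alpha> \<beta> r \<gamma> :: real
    and H :: "complex \<Rightarrow> complex"
    and H' :: "complex \<Rightarrow> complex \<Rightarrow>\<^sub>L complex"
  assumes "0 < \<alpha>" "\<alpha> < \<beta>" "\<beta> < 1" "r * \<beta> \<ge> 1" "0 < \<gamma>"
    and holder: "\<exists>C. \<forall>z w. cmod (H z - H w) \<le> C * cmod (z - w) powr \<beta>"
    and deriv: "\<And>z. z \<noteq> 0 \<Longrightarrow> (H has_derivative blinfun_apply (H' z)) (at z)"
    and cont_deriv: "continuous_on (UNIV - {0}) H'"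
    and size_H: "\<exists>c1 c2. 0 < c1 \<and> 0 < c2 \<and>
        (\<forall>z. c1 * cmod z powr \<beta> \<le> cmod (H z) \<and> cmod (H z) \<le> c2 * cmod z powr \<beta>)"
    and size_H': "\<exists>c1 c2. 0 < c1 \<and> 0 < c2 \<and>
        (\<forall>z. z \<noteq> 0 \<longrightarrow> c1 * cmod z powr (\<beta> - 1) \<le> norm (H' z) \<and>
                          norm (H' z) \<le> c2 * cmod z powr (\<beta> - 1))"
  shows "\<exists>\<epsilon>0 > 0. \<forall>\<epsilon>. 0 < \<epsilon> \<and> \<epsilon> < \<epsilon>0 \<longrightarrow>
          (\<exists>C::real. \<forall>f :: 'n::euclidean_space \<Rightarrow> complex. f \<in> borel_measurable lborel \<longrightarrow>
             besov_norm \<alpha> r (\<lambda>x. H (f x) * complex_of_real (loglog_weight \<gamma> (cmod (f x))))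
             \<le> ennreal C * (enn_powr (besov_norm (\<alpha> / \<beta>) (\<beta> * r) f) \<beta>
                 + enn_powr (besov_norm (\<alpha> / (\<beta> + \<epsilon>)) ((\<beta> + \<epsilon>) * r) f) (\<beta> + \<epsilon>)))"
proof -
  obtain Ch where Ch: "\<forall>z w. cmod (H z - H w) \<le> Ch * cmod (z - w) powr \<beta>" using holder by blast
  obtain c1 c2 where c: "0 < c1" "0 < c2"
      "\<forall>z. c1 * cmod z powr \<beta> \<le> cmod (H z) \<and> cmod (H z) \<le> c2 * cmod z powr \<beta>"
    using size_H by blast
  obtain d1 c3 where c': "0 < d1" "0 < c3"
      "\<forall>z. z \<noteq> 0 \<longrightarrow> d1 * cmod z powr (\<beta> - 1) \<le> norm (H' z) \<and> norm (H' z) \<le> c3 * cmod z powr (\<beta> - 1)"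
    using size_H' by blast
  have b0: "\<beta> > 0" using assms by linarith
  have Hc: "continuous_on UNIV H" by (rule holder_cont[OF b0 Ch])
  have r1: "r \<ge> 1"
  proof (rule ccontr)
    assume "\<not> r \<ge> 1"
    hence "r < 1" by simp
    show False
    proof (cases "r \<le> 0")
      case True
      hence "r * \<beta> \<le> 0" using b0 by (simp add: mult_nonpos_nonneg)
      thus False using assms(4) by linarith
    next
      case False
      have "r * \<beta> < 1 * \<beta>" using \<open>r < 1\<close> b0 by (intro mult_strict_right_mono) auto
      thus False using assms(3,4) by linarith
    qed
  qed
  have rpos: "r > 0" using r1 by simp
  define F where "F z = H z * complex_of_real (loglog_weight \<gamma> (cmod z))" for z
  have Fc: "continuous_on UNIV F"
  proof -
    have "continuous_on UNIV (\<lambda>z. complex_of_real (loglog_weight \<gamma> (cmod z)))"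
      by (intro continuous_on_of_real continuous_on_compose2[OF g_cont[of \<gamma>]] continuous_intros) auto
    thus ?thesis unfolding F_def by (intro continuous_on_mult Hc)
  qed
  have Fm: "F \<in> borel_measurable borel" using Fc by (rule borel_measurable_continuous_onI)
  show ?thesis
  proof (rule exI[of _ "1 - \<beta>"], intro conjI allI impI)
    show "1 - \<beta> > 0" using assms by simp
    fix \<epsilon> :: real assume "0 < \<epsilon> \<and> \<epsilon> < 1 - \<beta>"
    hence e: "0 < \<epsilon>" "\<beta> + \<epsilon> \<le> 1" by auto
    obtain Kg where Kg: "Kg > 0" "\<forall>s\<ge>0. loglog_weight \<gamma> s \<le> Kg * (1 + s powr \<epsilon>)"
      using g_growth[OF assms(5) e(1)] by blast
    obtain Kd where Kd: "Kd > 0" "\<forall>z>0. \<bar>gd \<gamma> z\<bar> * z \<le> Kd * (1 + z powr \<epsilon>)"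
      using gd_bound[OF assms(5) e(1)] by blast
    have Kg': "0 \<le> loglog_weight \<gamma> s \<and> loglog_weight \<gamma> s \<le> Kg * (1 + s powr \<epsilon>)" if "s \<ge> 0" for s
      using g_nonneg Kg that by auto
    have Kd': "(loglog_weight \<gamma> has_real_derivative gd \<gamma> z) (at z) \<and> \<bar>gd \<gamma> z\<bar> * z \<le> Kd * (1 + z powr \<epsilon>)"
      if "z > 0" for z
    proof
      show "(loglog_weight \<gamma> has_real_derivative gd \<gamma> z) (at z)" unfolding gd_def by (rule g_has_deriv)
      show "\<bar>gd \<gamma> z\<bar> * z \<le> Kd * (1 + z powr \<epsilon>)" using Kd that by auto
    qed
    have c2': "cmod (H z) \<le> c2 * cmod z powr \<beta>" for z using c by auto
    have c3': "norm (H' z) \<le> c3 * cmod z powr (\<beta> - 1)" if "z \<noteq> 0" for z using c' that by auto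
    define K where "K = 4*c2*Kg + c3 * 2 powr (1-\<beta>) * Kg + 2*c2*Kd"
    have K0: "K \<ge> 0" unfolding K_def using c c' Kg Kd by auto
    have pw1: "cmod (F a - F b) \<le> K * (cmod (a-b) powr \<beta> + cmod (a-b) powr (\<beta>+\<epsilon>))" for a b
      unfolding F_def K_def
      by (rule pointwise_sym[OF b0 e(2) e(1) c(2) c2' c'(2) c3' deriv Kg(1) Kg' Kd(1) Kd'])
    define K2 where "K2 = (2 * K) powr r"
    have K20: "K2 \<ge> 0" by (simp add: K2_def)
    have pw: "cmod (F a - F b) powr r \<le> K2 * (cmod (a-b) powr (\<beta>*r) + cmod (a-b) powr ((\<beta>+\<epsilon>)*r))" for a b
    proof -
      have "cmod (F a - F b) powr r \<le> (2 * K) powr r * ((cmod (a-b) powr \<beta>) powr r + (cmod (a-b) powr (\<beta>+\<epsilon>)) powr r)"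
        by (rule pow_bound) (use pw1[of a b] K0 rpos in auto)
      thus ?thesis by (simp add: K2_def powr_powr)
    qed
    show "\<exists>C::real. \<forall>f :: 'n::euclidean_space \<Rightarrow> complex. f \<in> borel_measurable lborel \<longrightarrow>
             besov_norm \<alpha> r (\<lambda>x. H (f x) * complex_of_real (loglog_weight \<gamma> (cmod (f x))))
             \<le> ennreal C * (enn_powr (besov_norm (\<alpha> / \<beta>) (\<beta> * r) f) \<beta>
                 + enn_powr (besov_norm (\<alpha> / (\<beta> + \<epsilon>)) ((\<beta> + \<epsilon>) * r) f) (\<beta> + \<epsilon>))"
    proof (intro exI[of _ "2 * K2 powr (1/r) + 1"] allI impI)
      fix f :: "'n::euclidean_space \<Rightarrow> complex" assume f: "f \<in> borel_measurable lborel"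
      have Ff: "(\<lambda>x. F (f x)) \<in> borel_measurable lborel" by (rule measurable_compose[OF f Fm])
      have ex1: "\<alpha> * r = \<alpha> / \<beta> * (\<beta> * r)" using b0 by simp
      have ex2: "\<alpha> * r = \<alpha> / (\<beta> + \<epsilon>) * ((\<beta> + \<epsilon>) * r)" using b0 e by simp
      have P: "besov_pow \<alpha> r (\<lambda>x. F (f x)) \<le> ennreal K2 * (besov_pow (\<alpha> / \<beta>) (\<beta> * r) f + besov_pow (\<alpha> / (\<beta> + \<epsilon>)) ((\<beta> + \<epsilon>) * r) f)"
        by (rule besov_bound[OF f Ff K20 pw ex1 ex2])
      have fin: "enn_powr (besov_pow \<alpha> r (\<lambda>x. F (f x))) (1 / r) \<le> ennreal (2 * K2 powr (1/r) + 1) *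
          (enn_powr (besov_pow (\<alpha> / \<beta>) (\<beta> * r) f) (1 / r) + enn_powr (besov_pow (\<alpha> / (\<beta> + \<epsilon>)) ((\<beta> + \<epsilon>) * r) f) (1 / r))"
        by (rule enn_final[OF P K20 r1])
      have q1: "enn_powr (besov_norm (\<alpha> / \<beta>) (\<beta> * r) f) \<beta> = enn_powr (besov_pow (\<alpha> / \<beta>) (\<beta> * r) f) (1 / r)"
        unfolding besov_norm_def by (rule enn_powr_powr[OF b0 rpos])
      have q2: "enn_powr (besov_norm (\<alpha> / (\<beta>+\<epsilon>)) ((\<beta>+\<epsilon>) * r) f) (\<beta>+\<epsilon>) = enn_powr (besov_pow (\<alpha> / (\<beta>+\<epsilon>)) ((\<beta>+\<epsilon>) * r) f) (1 / r)"
        unfolding besov_norm_def using b0 e rpos by (intro enn_powr_powr) auto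
      have q0: "besov_norm \<alpha> r (\<lambda>x. H (f x) * complex_of_real (loglog_weight \<gamma> (cmod (f x))))
          = enn_powr (besov_pow \<alpha> r (\<lambda>x. F (f x))) (1 / r)"
        unfolding besov_norm_def F_def ..
      show "besov_norm \<alpha> r (\<lambda>x. H (f x) * complex_of_real (loglog_weight \<gamma> (cmod (f x))))
             \<le> ennreal (2 * K2 powr (1/r) + 1) * (enn_powr (besov_norm (\<alpha> / \<beta>) (\<beta> * r) f) \<beta>
                 + enn_powr (besov_norm (\<alpha> / (\<beta> + \<epsilon>)) ((\<beta> + \<epsilon>) * r) f) (\<beta> + \<epsilon>))"
        unfolding q0 q1 q2 by (rule fin)
    qed
  qed
qed


end
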